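(* Assume $b_1<n^*$ and $b_2<m^*$, and let $\epsilon=b_1b_2\bigl(\frac{1}{\max\{b_1,m^*\}}-\frac{1}{n^*}\bigr)$. For every minimum set cover $S^{\min}$ (a set cover of size $n^*$) and every maximum set packing $T^{\max}$ (a set packing of size $m^*$): (i.a) $(\sigma^1(S^{\min},b_1),\sigma^2(T^{\max},b_2))$ is an $\epsilon$-Nash equilibrium of $\Gamma(b_1,b_2)$; (i.b) for every Nash equilibrium $(\sigma^{1*},\sigma^{2*})$ of $\Gamma(b_1,b_2)$ and each $j\in\{1,2\}$, $|U_j(\sigma^1(S^{\min},b_1),\sigma^2(T^{\max},b_2))-U_j(\sigma^{1*},\sigma^{2*})|\le\epsilon$; (ii) $\min_{\sigma^2} r(\sigma^1(S^{\min},b_1),\sigma^2)=\frac{b_1}{n^*}$, the minimum being over all $\sigma^2\in\Delta(\mathcal A_2)$ supported on nonempty attack plans, and for every Nash equilibrium $(\sigma^{1*},\sigma^{2*})$ of $\Gamma(b_1,b_2)$, $\frac{b_1}{n^*}\ge\frac{\max\{b_1,m^*\}}{n^*}\,r(\sigma^{1*},\sigma^{2*})$.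
   Context: Detection model: finite nonempty sets $\mathcal V$, $\mathcal E$, monitoring sets $\mathcal C_i\subseteq\mathcal E$ ($i\in\mathcal V$) with every $e\in\mathcal E$ in some $\mathcal C_i$; $\mathcal C_S=\bigcup_{i\in S}\mathcal C_i$; $F(S,T)=|\mathcal C_S\cap T|$. Set cover: $S\subseteq\mathcal V$ with $\mathcal C_S=\mathcal E$; $n^*$ = minimum size of a set cover. Set packing: $T\subseteq\mathcal E$ with $|\mathcal C_i\cap T|\le1$ for all $i$; $m^*$ = maximum size of a set packing. Game $\Gamma(b_1,b_2)$ ($b_1,b_2$ positive integers): $\mathcal A_1=\{S\subseteq\mathcal V:|S|\le b_1\}$, $\mathcal A_2=\{T\subseteq\mathcal E:|T|\le b_2\}$; mixed strategies $\sigma^1\in\Delta(\mathcal A_1)$, $\sigma^2\in\Delta(\mathcal A_2)$ (independent); payoffs $U_1=\mathbb E[F(S,T)]$, $U_2=\mathbb E[|T|]-\mathbb E[F(S,T)]$. Nash equilibrium as usual; for $\epsilon\ge0$ an $\epsilon$-Nash equilibrium is a profile $(\sigma^{1\prime},\sigma^{2\prime})$ with $U_1(\sigma^{1\prime},\sigma^{2\prime})\ge U_1(\sigma^1,\sigma^{2\prime})-\epsilon$ for all $\sigma^1$ and $U_2(\sigma^{1\prime},\sigma^{2\prime})\ge U_2(\sigma^{1\prime},\sigma^2)-\epsilon$ for all $\sigma^2$. Expected detection rate: $r(\sigma)=\mathbb E[F(S,T)/|T|]$ for profiles whose attack strategy is supported on nonempty sets. Cyclic strategies: for $S=\{i_1,\dots,i_n\}$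 (fixed enumeration) with $n\ge b_1$, $S^k=\{i_k,\dots,i_{k+b_1-1}\}$ with indices cyclic mod $n$, $k=1,\dots,n$, and $\sigma^1(S,b_1)$ puts probability $1/n$ on each $S^k$; for $T=\{e_1,\dots,e_m\}$ with $m\ge b_2$, $T^l=\{e_l,\dots,e_{l+b_2-1}\}$ cyclically and $\sigma^2(T,b_2)$ puts probability $1/m$ on each $T^l$. *)

theory Defs
  imports "HOL-Probability.Probability"
begin

definition detection_model :: "'v set \<Rightarrow> 'e set \<Rightarrow> ('v \<Rightarrow> 'e set) \<Rightarrow> bool" where
  "detection_model V E C \<longleftrightarrow> finite V \<and> V \<noteq> {} \<and> finite E \<and> E \<noteq> {} \<and>
     (\<forall>i\<in>V. C i \<subseteq> E) \<and> (\<forall>e\<in>E. \<exists>i\<in>V. e \<in> C i)"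

definition CS :: "('v \<Rightarrow> 'e set) \<Rightarrow> 'v set \<Rightarrow> 'e set" where
  "CS C S = (\<Union>i\<in>S. C i)"

definition Fdet :: "('v \<Rightarrow> 'e set) \<Rightarrow> 'v set \<Rightarrow> 'e set \<Rightarrow> nat" where
  "Fdet C S T = card (CS C S \<inter> T)"

definition set_cover :: "'v set \<Rightarrow> 'e set \<Rightarrow> ('v \<Rightarrow> 'e set) \<Rightarrow> 'v set \<Rightarrow> bool" where
  "set_cover V E C S \<longleftrightarrow> S \<subseteq> V \<and> CS C S = E"

definition set_packing :: "'v set \<Rightarrow> 'e set \<Rightarrow> ('v \<Rightarrow> 'e set) \<Rightarrow> 'e set \<Rightarrow> bool" where
  "set_packing V E C T \<longleftrightarrow> T \<subseteq> E \<and> (\<forall>i\<in>V. card (C i \<inter> T) \<le> 1)"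

definition nstar :: "'v set \<Rightarrow> 'e set \<Rightarrow> ('v \<Rightarrow> 'e set) \<Rightarrow> nat" where
  "nstar V E C = Min {card S | S. set_cover V E C S}"

definition mstar :: "'v set \<Rightarrow> 'e set \<Rightarrow> ('v \<Rightarrow> 'e set) \<Rightarrow> nat" where
  "mstar V E C = Max {card T | T. set_packing V E C T}"

definition A1 :: "'v set \<Rightarrow> nat \<Rightarrow> 'v set set" where
  "A1 V b1 = {S. S \<subseteq> V \<and> card S \<le> b1}"

definition A2 :: "'e set \<Rightarrow> nat \<Rightarrow> 'e set set" where
  "A2 E b2 = {T. T \<subseteq> E \<and> card T \<le> b2}"

definition U1 :: "('v \<Rightarrow> 'e set) \<Rightarrow> 'v set pmf \<Rightarrow> 'e set pmf \<Rightarrow> real" where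
  "U1 C \<sigma>1 \<sigma>2 = measure_pmf.expectation (pair_pmf \<sigma>1 \<sigma>2) (\<lambda>(S, T). real (Fdet C S T))"

definition U2 :: "('v \<Rightarrow> 'e set) \<Rightarrow> 'v set pmf \<Rightarrow> 'e set pmf \<Rightarrow> real" where
  "U2 C \<sigma>1 \<sigma>2 = measure_pmf.expectation (pair_pmf \<sigma>1 \<sigma>2)
      (\<lambda>(S, T). real (card T) - real (Fdet C S T))"

definition detection_rate :: "('v \<Rightarrow> 'e set) \<Rightarrow> 'v set pmf \<Rightarrow> 'e set pmf \<Rightarrow> real" where
  "detection_rate C \<sigma>1 \<sigma>2 = measure_pmf.expectation (pair_pmf \<sigma>1 \<sigma>2)
      (\<lambda>(S, T). real (Fdet C S T) / real (card T))"

definition eps_nash :: "'v set \<Rightarrow> 'e set \<Rightarrow> ('v \<Rightarrow> 'e set) \<Rightarrow> nat \<Rightarrow> nat \<Rightarrow> real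
    \<Rightarrow> 'v set pmf \<Rightarrow> 'e set pmf \<Rightarrow> bool" where
  "eps_nash V E C b1 b2 \<epsilon> \<sigma>1 \<sigma>2 \<longleftrightarrow>
     set_pmf \<sigma>1 \<subseteq> A1 V b1 \<and> set_pmf \<sigma>2 \<subseteq> A2 E b2 \<and>
     (\<forall>\<tau>1. set_pmf \<tau>1 \<subseteq> A1 V b1 \<longrightarrow> U1 C \<sigma>1 \<sigma>2 \<ge> U1 C \<tau>1 \<sigma>2 - \<epsilon>) \<and>
     (\<forall>\<tau>2. set_pmf \<tau>2 \<subseteq> A2 E b2 \<longrightarrow> U2 C \<sigma>1 \<sigma>2 \<ge> U2 C \<sigma>1 \<tau>2 - \<epsilon>)"

definition nash :: "'v set \<Rightarrow> 'e set \<Rightarrow> ('v \<Rightarrow> 'e set) \<Rightarrow> nat \<Rightarrow> nat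
    \<Rightarrow> 'v set pmf \<Rightarrow> 'e set pmf \<Rightarrow> bool" where
  "nash V E C b1 b2 \<sigma>1 \<sigma>2 \<longleftrightarrow> eps_nash V E C b1 b2 0 \<sigma>1 \<sigma>2"

text \<open>A set is given by a fixed enumeration, i.e. a distinct list
  xs = [x_0, ..., x_(n-1)]; window k is {x_k, ..., x_(k+b-1)} with indices mod n (0-based),
  and the cyclic strategy picks k uniformly from {0..<n}.\<close>

definition cyc_window :: "'a list \<Rightarrow> nat \<Rightarrow> nat \<Rightarrow> 'a set" where
  "cyc_window xs b k = (\<lambda>j. xs ! ((k + j) mod length xs)) ` {0..<b}"

definition cyclic_strategy :: "'a list \<Rightarrow> nat \<Rightarrow> 'a set pmf" where
  "cyclic_strategy xs b = map_pmf (cyc_window xs b) (pmf_of_set {0..<length xs})"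

end

theory Submission
  imports Defs
begin



definition PE :: "'a pmf \<Rightarrow> ('a \<Rightarrow> real) \<Rightarrow> real" where
  "PE p f = (\<Sum>x\<in>set_pmf p. pmf p x * f x)"

lemma exp_EX: "finite (set_pmf p) \<Longrightarrow> measure_pmf.expectation p f = PE p f"
  unfolding PE_def by (subst integral_measure_pmf_real[of "set_pmf p"]) (auto simp: mult.commute)

lemma PE_const: "finite (set_pmf p) \<Longrightarrow> PE p (\<lambda>_. c) = c"
proof -
  assume f: "finite (set_pmf p)"
  have "PE p (\<lambda>_. c) = (\<Sum>x\<in>set_pmf p. pmf p x) * c" unfolding PE_def by (rule sum_distrib_right[symmetric])
  also have "(\<Sum>x\<in>set_pmf p. pmf p x) = 1" by (rule sum_pmf_eq_1[OF f]) simp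
  finally show ?thesis by simp
qed

lemma PE_mono: "(\<And>x. x \<in> set_pmf p \<Longrightarrow> f x \<le> g x) \<Longrightarrow> PE p f \<le> PE p g"
  unfolding PE_def by (rule sum_mono) (simp add: mult_left_mono)

lemma PE_add: "PE p (\<lambda>x. f x + g x) = PE p f + PE p g"
  unfolding PE_def by (simp add: distrib_left sum.distrib)

lemma PE_diff: "PE p (\<lambda>x. f x - g x) = PE p f - PE p g"
  unfolding PE_def by (simp add: right_diff_distrib sum_subtractf)

lemma PE_cmult: "PE p (\<lambda>x. c * f x) = c * PE p f"
  unfolding PE_def by (simp add: sum_distrib_left mult_ac)

lemma PE_divide: "PE p (\<lambda>x. f x / c) = PE p f / c"
  unfolding PE_def by (simp add: sum_divide_distrib)

lemma PE_return: "PE (return_pmf a) f = f a"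
  unfolding PE_def by simp

lemma PE_cong: "(\<And>x. x \<in> set_pmf p \<Longrightarrow> f x = g x) \<Longrightarrow> PE p f = PE p g"
  unfolding PE_def by (intro sum.cong) auto

lemma PE_swap: "PE p (\<lambda>x. PE q (\<lambda>y. f x y)) = PE q (\<lambda>y. PE p (\<lambda>x. f x y))"
proof -
  have "PE p (\<lambda>x. PE q (\<lambda>y. f x y)) = (\<Sum>x\<in>set_pmf p. \<Sum>y\<in>set_pmf q. pmf p x * (pmf q y * f x y))"
    unfolding PE_def by (simp add: sum_distrib_left)
  also have "\<dots> = (\<Sum>y\<in>set_pmf q. \<Sum>x\<in>set_pmf p. pmf p x * (pmf q y * f x y))"
    by (rule sum.swap)
  also have "\<dots> = PE q (\<lambda>y. PE p (\<lambda>x. f x y))"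
    unfolding PE_def sum_distrib_left by (intro sum.cong refl) (simp add: mult_ac)
  finally show ?thesis .
qed

lemma PE_pair:
  assumes "finite (set_pmf p)" "finite (set_pmf q)"
  shows "measure_pmf.expectation (pair_pmf p q) (\<lambda>(x,y). f x y) = PE q (\<lambda>y. PE p (\<lambda>x. f x y))"
proof -
  have "measure_pmf.expectation (pair_pmf p q) (\<lambda>(x,y). f x y) = PE (pair_pmf p q) (\<lambda>(x,y). f x y)"
    using assms by (intro exp_EX) simp
  also have "\<dots> = PE p (\<lambda>x. PE q (\<lambda>y. f x y))"
  proof -
    have "PE (pair_pmf p q) (\<lambda>(x,y). f x y) = (\<Sum>z\<in>set_pmf p \<times> set_pmf q. pmf p (fst z) * (pmf q (snd z) * f (fst z) (snd z)))"
      unfolding PE_def by (intro sum.cong) (auto simp: pmf_pair)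
    also have "\<dots> = PE p (\<lambda>x. PE q (\<lambda>y. f x y))"
      unfolding PE_def sum_distrib_left by (subst sum.cartesian_product) (simp add: split_def)
    finally show ?thesis .
  qed
  also have "\<dots> = PE q (\<lambda>y. PE p (\<lambda>x. f x y))" by (rule PE_swap)
  finally show ?thesis .
qed

lemma PE_avg_eq:
  assumes "finite (set_pmf p)" "\<And>x. x \<in> set_pmf p \<Longrightarrow> f x \<le> c" "PE p f \<ge> c" "a \<in> set_pmf p"
  shows "f a = c"
proof -
  have e1: "PE p (\<lambda>x. c - f x) = c - PE p f" by (simp add: PE_diff PE_const[OF assms(1)])
  have e2: "PE p (\<lambda>x. c - f x) \<ge> PE p (\<lambda>_. 0)" by (rule PE_mono) (use assms(2) in auto)
  have "PE p (\<lambda>x. c - f x) = 0" using e1 e2 PE_const[OF assms(1), of 0] assms(3) by linarith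
  then have h1: "(\<Sum>x\<in>set_pmf p. pmf p x * (c - f x)) = 0" by (simp add: PE_def)
  have h2: "\<forall>x\<in>set_pmf p. 0 \<le> pmf p x * (c - f x)" using assms(2) by simp
  have "\<forall>x\<in>set_pmf p. pmf p x * (c - f x) = 0"
    using sum_nonneg_eq_0_iff[of "set_pmf p" "\<lambda>x. pmf p x * (c - f x)"] assms(1) h1 h2 by simp
  then have "pmf p a * (c - f a) = 0" using assms(4) by simp
  then show ?thesis using pmf_positive[OF assms(4)] by simp
qed




lemma finite_covers:
  assumes "detection_model V E C"
  shows "finite {card S |S. set_cover V E C S}"
proof -
  have "{card S |S. set_cover V E C S} \<subseteq> card ` Pow V" by (auto simp: set_cover_def)
  moreover have "finite V" using assms by (simp add: detection_model_def)
  ultimately show ?thesis by (meson finite_Pow_iff finite_imageI finite_subset)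
qed

lemma nstar_le:
  assumes "detection_model V E C" "set_cover V E C S"
  shows "nstar V E C \<le> card S"
  unfolding nstar_def using assms finite_covers[OF assms(1)] by (intro Min_le) auto

lemma pack_le_cover:
  assumes m: "detection_model V E C" and S: "set_cover V E C S" and T: "set_packing V E C T"
  shows "card T \<le> card S"
proof -
  have fin: "finite V" "finite E" using m by (auto simp: detection_model_def)
  have SV: "S \<subseteq> V" and cov: "CS C S = E" using S by (auto simp: set_cover_def)
  have TE: "T \<subseteq> E" and pk: "\<forall>i\<in>V. card (C i \<inter> T) \<le> 1" using T by (auto simp: set_packing_def)
  have "\<forall>e\<in>T. \<exists>i\<in>S. e \<in> C i" using TE cov by (auto simp: CS_def)
  then obtain f where f: "\<And>e. e \<in> T \<Longrightarrow> f e \<in> S \<and> e \<in> C (f e)" by metis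
  have "inj_on f T"
  proof (rule inj_onI)
    fix a b assume ab: "a \<in> T" "b \<in> T" "f a = f b"
    have "f a \<in> V" using f ab SV by auto
    then have c1: "card (C (f a) \<inter> T) \<le> 1" using pk by auto
    have fin2: "finite (C (f a) \<inter> T)" using TE fin by (meson finite_Int finite_subset)
    have "a \<in> C (f a) \<inter> T" "b \<in> C (f a) \<inter> T" using f[of a] f[of b] ab by auto
    then show "a = b" using c1 fin2 by (metis card_le_Suc0_iff_eq One_nat_def)
  qed
  moreover have "f ` T \<subseteq> S" using f by auto
  moreover have "finite S" using SV fin finite_subset by auto
  ultimately show ?thesis by (rule card_inj_on_le)
qed

lemma uncovered:
  assumes m: "detection_model V E C" and SV: "S \<subseteq> V"
  shows "nstar V E C \<le> card S + card (E - CS C S)"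
proof -
  have fin: "finite V" "finite E" and sub: "\<forall>i\<in>V. C i \<subseteq> E" and cv: "\<forall>e\<in>E. \<exists>i\<in>V. e \<in> C i"
    using m by (auto simp: detection_model_def)
  obtain g where g: "\<And>e. e \<in> E \<Longrightarrow> g e \<in> V \<and> e \<in> C (g e)" using cv by metis
  let ?S = "S \<union> g ` (E - CS C S)"
  have "set_cover V E C ?S"
    unfolding set_cover_def
  proof
    show "?S \<subseteq> V" using SV g by auto
    show "CS C ?S = E"
    proof
      show "CS C ?S \<subseteq> E" using sub SV g by (auto simp: CS_def)
      show "E \<subseteq> CS C ?S"
      proof
        fix e assume e: "e \<in> E"
        show "e \<in> CS C ?S"
        proof (cases "e \<in> CS C S")
          case True then show ?thesis by (auto simp: CS_def)
        next
          case False then have "g e \<in> ?S" using e by auto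
          then show ?thesis using g[OF e] unfolding CS_def by blast
        qed
      qed
    qed
  qed
  then have "nstar V E C \<le> card ?S" by (rule nstar_le[OF m])
  also have "\<dots> \<le> card S + card (g ` (E - CS C S))" by (rule card_Un_le)
  also have "\<dots> \<le> card S + card (E - CS C S)" using fin by (simp add: card_image_le)
  finally show ?thesis .
qed

lemma card_CS_pack:
  assumes m: "detection_model V E C" and SV: "S \<subseteq> V" and T: "set_packing V E C T"
  shows "card (CS C S \<inter> T) \<le> card S"
proof -
  have fin: "finite V" "finite E" using m by (auto simp: detection_model_def)
  have TE: "T \<subseteq> E" and pk: "\<forall>i\<in>V. card (C i \<inter> T) \<le> 1" using T by (auto simp: set_packing_def)
  have fS: "finite S" using SV fin finite_subset by auto
  have "CS C S \<inter> T = (\<Union>i\<in>S. C i \<inter> T)" by (auto simp: CS_def)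
  then have "card (CS C S \<inter> T) \<le> (\<Sum>i\<in>S. card (C i \<inter> T))" using card_UN_le[OF fS, of "\<lambda>i. C i \<inter> T"] by simp
  also have "\<dots> \<le> (\<Sum>i\<in>S. 1)" using pk SV by (intro sum_mono) auto
  finally show ?thesis by simp
qed

lemma private_elem:
  assumes m: "detection_model V E C" and S: "set_cover V E C Smin" "card Smin = nstar V E C"
    and x: "x \<in> Smin"
  shows "\<exists>e\<in>C x. \<forall>i\<in>Smin. e \<in> C i \<longrightarrow> i = x"
proof (rule ccontr)
  assume "\<not> ?thesis"
  then have h: "\<forall>e\<in>C x. \<exists>i\<in>Smin. e \<in> C i \<and> i \<noteq> x" by blast
  have fin: "finite V" using m by (auto simp: detection_model_def)
  have SV: "Smin \<subseteq> V" and cov: "CS C Smin = E" using S by (auto simp: set_cover_def)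
  have "CS C (Smin - {x}) = CS C Smin"
  proof
    show "CS C (Smin - {x}) \<subseteq> CS C Smin" by (auto simp: CS_def)
    show "CS C Smin \<subseteq> CS C (Smin - {x})"
      unfolding CS_def using h by blast
  qed
  then have "set_cover V E C (Smin - {x})" using SV cov by (auto simp: set_cover_def)
  then have "nstar V E C \<le> card (Smin - {x})" by (rule nstar_le[OF m])
  moreover have "card (Smin - {x}) < card Smin" using x SV fin
    by (meson card_Diff1_less finite_subset)
  ultimately show False using S by simp
qed




lemma modinj: fixes k j1 j2 n :: nat assumes "j1<n" "j2<n" "(k+j1) mod n = (k+j2) mod n" shows "j1 = j2"
proof -
  have *: "a = b" if "a \<le> b" "a<n" "b<n" "(k+a) mod n = (k+b) mod n" for a b :: nat
  proof -
    have "n dvd (k+b) - (k+a)" using that mod_eq_dvd_iff_nat[of "k+a" "k+b" n] by auto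
    then have "n dvd b - a" by simp
    moreover have "b - a < n" using that by simp
    ultimately have "b - a = 0" by (metis nat_dvd_not_less neq0_conv)
    then show ?thesis using that by simp
  qed
  show ?thesis using *[of j1 j2] *[of j2 j1] assms by (cases "j1 \<le> j2") auto
qed

lemma modkey: fixes k j p n :: nat assumes "k<n" "j<n" "p<n" shows "(k+j) mod n = p \<longleftrightarrow> k = (p+n-j) mod n"
proof
  have e: "((p+n-j) mod n + j) mod n = p"
    using assms by (simp add: mod_add_left_eq)
  show "(k+j) mod n = p \<Longrightarrow> k = (p+n-j) mod n"
  proof -
    assume h: "(k+j) mod n = p"
    have "(j+k) mod n = (j + (p+n-j) mod n) mod n" using e h by (simp add: add.commute)
    then show ?thesis using modinj[of k n "(p+n-j) mod n" j] assms by simp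
  qed
  show "k = (p+n-j) mod n \<Longrightarrow> (k+j) mod n = p" using e by simp
qed

lemma card_as_sum: "finite B \<Longrightarrow> real (card (B \<inter> A)) = (\<Sum>x\<in>B. if x \<in> A then 1 else 0)"
proof -
  assume f: "finite B"
  have "B \<inter> A = {x\<in>B. x \<in> A}" by auto
  then have "real (card (B \<inter> A)) = (\<Sum>x\<in>{x\<in>B. x \<in> A}. 1)" by simp
  also have "\<dots> = (\<Sum>x\<in>B. if x \<in> A then 1 else 0)" using f by (rule sum.inter_filter)
  finally show ?thesis .
qed

lemma sum_ind_card: "finite A \<Longrightarrow> (\<Sum>k\<in>A. if P k then 1 else 0 :: real) = real (card {k\<in>A. P k})"
  using sum.inter_filter[of A "\<lambda>_. 1::real" P] by simp

lemma cyc_sub: "xs \<noteq> [] \<Longrightarrow> cyc_window xs b k \<subseteq> set xs"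
  unfolding cyc_window_def by auto

lemma cyc_card_le: "card (cyc_window xs b k) \<le> b"
  unfolding cyc_window_def using card_image_le[of "{0..<b}"] by simp

lemma cyc_card:
  assumes "distinct xs" "b \<le> length xs"
  shows "card (cyc_window xs b k) = b"
proof -
  let ?n = "length xs"
  have "inj_on (\<lambda>j. xs ! ((k + j) mod ?n)) {0..<b}"
  proof (rule inj_onI)
    fix j1 j2 assume h: "j1 \<in> {0..<b}" "j2 \<in> {0..<b}" "xs ! ((k + j1) mod ?n) = xs ! ((k + j2) mod ?n)"
    have pos: "0 < ?n" using h assms by auto
    have "(k+j1) mod ?n < ?n" "(k+j2) mod ?n < ?n" using pos by auto
    then have "(k + j1) mod ?n = (k + j2) mod ?n" using h assms nth_eq_iff_index_eq by blast
    then show "j1 = j2" using modinj[of j1 ?n j2 k] h assms by auto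
  qed
  then show ?thesis unfolding cyc_window_def by (simp add: card_image)
qed

lemma cyc_count:
  assumes d: "distinct xs" and b: "b \<le> length xs" and x: "x \<in> set xs"
  shows "card {k\<in>{0..<length xs}. x \<in> cyc_window xs b k} = b"
proof -
  let ?n = "length xs"
  obtain p where p: "p < ?n" "x = xs ! p" using x by (metis in_set_conv_nth)
  have nn0: "0 < ?n" using p(1) by linarith
  have mem: "x \<in> cyc_window xs b k \<longleftrightarrow> (\<exists>j<b. (k+j) mod ?n = p)" for k
  proof -
    have n0: "0 < ?n" using p(1) by linarith
    have "x \<in> cyc_window xs b k \<longleftrightarrow> (\<exists>j<b. xs ! p = xs ! ((k+j) mod ?n))"
      unfolding cyc_window_def p image_iff by auto
    also have "\<dots> \<longleftrightarrow> (\<exists>j<b. (k+j) mod ?n = p)"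
      using d p n0 by (auto simp: nth_eq_iff_index_eq)
    finally show ?thesis .
  qed
  have eq: "{k\<in>{0..<?n}. x \<in> cyc_window xs b k} = (\<lambda>j. (p + ?n - j) mod ?n) ` {0..<b}"
  proof
    show "{k\<in>{0..<?n}. x \<in> cyc_window xs b k} \<subseteq> (\<lambda>j. (p + ?n - j) mod ?n) ` {0..<b}"
    proof
      fix k assume "k \<in> {k\<in>{0..<?n}. x \<in> cyc_window xs b k}"
      then obtain j where "k < ?n" "j < b" "(k+j) mod ?n = p" using mem by auto
      then have "k = (p + ?n - j) mod ?n" using modkey[of k ?n j p] b p by auto
      then show "k \<in> (\<lambda>j. (p + ?n - j) mod ?n) ` {0..<b}" using \<open>j < b\<close> by auto
    qed
    show "(\<lambda>j. (p + ?n - j) mod ?n) ` {0..<b} \<subseteq> {k\<in>{0..<?n}. x \<in> cyc_window xs b k}"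
    proof
      fix k assume "k \<in> (\<lambda>j. (p + ?n - j) mod ?n) ` {0..<b}"
      then obtain j where j: "j < b" "k = (p + ?n - j) mod ?n" by auto
      have kn: "k < ?n" using j nn0 by simp
      then have "(k+j) mod ?n = p" using modkey[of k ?n j p] j b p by auto
      then show "k \<in> {k\<in>{0..<?n}. x \<in> cyc_window xs b k}" using mem kn j by auto
    qed
  qed
  have "inj_on (\<lambda>j. (p + ?n - j) mod ?n) {0..<b}"
  proof (rule inj_onI)
    fix j1 j2 assume h: "j1 \<in> {0..<b}" "j2 \<in> {0..<b}" "(p + ?n - j1) mod ?n = (p + ?n - j2) mod ?n"
    let ?k = "(p + ?n - j1) mod ?n"
    have kn: "?k < ?n" using nn0 by simp
    have "(?k + j1) mod ?n = p" using modkey[of ?k ?n j1 p] kn h b p by auto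
    moreover have "(?k + j2) mod ?n = p" using modkey[of ?k ?n j2 p] kn h b p by auto
    ultimately show "j1 = j2" using modinj[of j1 ?n j2 ?k] h b by auto
  qed
  then show ?thesis unfolding eq by (simp add: card_image)
qed

lemma cyc_set: "xs \<noteq> [] \<Longrightarrow> set_pmf (cyclic_strategy xs b) = cyc_window xs b ` {0..<length xs}"
  unfolding cyclic_strategy_def by simp

lemma cyc_fin: "xs \<noteq> [] \<Longrightarrow> finite (set_pmf (cyclic_strategy xs b))"
  by (simp add: cyc_set)

lemma cyc_PE: "xs \<noteq> [] \<Longrightarrow> PE (cyclic_strategy xs b) f = (\<Sum>k\<in>{0..<length xs}. f (cyc_window xs b k)) / length xs"
proof -
  assume ne: "xs \<noteq> []"
  have "PE (cyclic_strategy xs b) f = measure_pmf.expectation (cyclic_strategy xs b) f"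
    using cyc_fin[OF ne] by (simp add: exp_EX)
  also have "\<dots> = (\<Sum>k\<in>{0..<length xs}. f (cyc_window xs b k)) / length xs"
    unfolding cyclic_strategy_def using ne by (simp add: integral_pmf_of_set)
  finally show ?thesis .
qed

lemma cyc_prob:
  assumes d: "distinct xs" and b: "b \<le> length xs" and x: "x \<in> set xs"
  shows "PE (cyclic_strategy xs b) (\<lambda>S. if x \<in> S then 1 else 0) = real b / length xs"
proof -
  have ne: "xs \<noteq> []" using x by auto
  have "(\<Sum>k\<in>{0..<length xs}. (if x \<in> cyc_window xs b k then 1 else 0 :: real))
        = real (card {k\<in>{0..<length xs}. x \<in> cyc_window xs b k})"
    by (rule sum_ind_card) simp
  also have "\<dots> = b" using cyc_count[OF assms] by simp
  finally show ?thesis using cyc_PE[OF ne] by simp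
qed

lemma cyc_mass:
  assumes d: "distinct xs" and b: "b \<le> length xs" and ne: "xs \<noteq> []"
  shows "PE (cyclic_strategy xs b) (\<lambda>S. real (card (S \<inter> A))) = real (card (set xs \<inter> A)) * b / length xs"
proof -
  have "(\<Sum>k\<in>{0..<length xs}. real (card (cyc_window xs b k \<inter> A)))
      = (\<Sum>k\<in>{0..<length xs}. \<Sum>x\<in>set xs \<inter> A. if x \<in> cyc_window xs b k then 1 else 0)"
  proof (intro sum.cong refl)
    fix k
    have "cyc_window xs b k \<inter> A = (set xs \<inter> A) \<inter> cyc_window xs b k" using cyc_sub[OF ne] by auto
    then show "real (card (cyc_window xs b k \<inter> A)) = (\<Sum>x\<in>set xs \<inter> A. if x \<in> cyc_window xs b k then 1 else 0)"
      using card_as_sum[of "set xs \<inter> A" "cyc_window xs b k"] by simp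
  qed
  also have "\<dots> = (\<Sum>x\<in>set xs \<inter> A. \<Sum>k\<in>{0..<length xs}. if x \<in> cyc_window xs b k then 1 else 0)"
    by (rule sum.swap)
  also have "\<dots> = (\<Sum>x\<in>set xs \<inter> A. real b)"
  proof (intro sum.cong refl)
    fix x assume "x \<in> set xs \<inter> A"
    then have "card {k\<in>{0..<length xs}. x \<in> cyc_window xs b k} = b" using cyc_count[OF d b] by auto
    then show "(\<Sum>k\<in>{0..<length xs}. if x \<in> cyc_window xs b k then 1 else 0) = real b"
      using sum_ind_card[of "{0..<length xs}" "\<lambda>k. x \<in> cyc_window xs b k"] by simp
  qed
  finally show ?thesis using cyc_PE[OF ne] by simp
qed





lemma PE_sum: "PE p (\<lambda>x. \<Sum>e\<in>T. f e x) = (\<Sum>e\<in>T. PE p (f e))"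
  unfolding PE_def sum_distrib_left by (rule sum.swap)

lemma finA1: "finite V \<Longrightarrow> finite (A1 V b)"
  unfolding A1_def by (rule finite_subset[of _ "Pow V"]) auto

lemma finA2: "finite E \<Longrightarrow> finite (A2 E b)"
  unfolding A2_def by (rule finite_subset[of _ "Pow E"]) auto

lemma U1_PE: "finite (set_pmf p) \<Longrightarrow> finite (set_pmf q) \<Longrightarrow>
  U1 C p q = PE q (\<lambda>T. PE p (\<lambda>S. real (Fdet C S T)))"
  unfolding U1_def by (rule PE_pair)

lemma U2_PE: "finite (set_pmf p) \<Longrightarrow> finite (set_pmf q) \<Longrightarrow>
  U2 C p q = PE q (\<lambda>T. real (card T) - PE p (\<lambda>S. real (Fdet C S T)))"
proof -
  assume a: "finite (set_pmf p)" "finite (set_pmf q)"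
  have "U2 C p q = PE q (\<lambda>T. PE p (\<lambda>S. real (card T) - real (Fdet C S T)))"
    unfolding U2_def by (rule PE_pair[OF a])
  also have "\<dots> = PE q (\<lambda>T. real (card T) - PE p (\<lambda>S. real (Fdet C S T)))"
    by (intro PE_cong) (simp add: PE_diff PE_const a)
  finally show ?thesis .
qed

lemma rate_PE: "finite (set_pmf p) \<Longrightarrow> finite (set_pmf q) \<Longrightarrow>
  detection_rate C p q = PE q (\<lambda>T. PE p (\<lambda>S. real (Fdet C S T)) / real (card T))"
proof -
  assume a: "finite (set_pmf p)" "finite (set_pmf q)"
  have "detection_rate C p q = PE q (\<lambda>T. PE p (\<lambda>S. real (Fdet C S T) / real (card T)))"
    unfolding detection_rate_def by (rule PE_pair[OF a])
  also have "\<dots> = PE q (\<lambda>T. PE p (\<lambda>S. real (Fdet C S T)) / real (card T))"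
    by (intro PE_cong) (rule PE_divide)
  finally show ?thesis .
qed

lemma Fdet_insert: "finite T \<Longrightarrow> e \<notin> T \<Longrightarrow>
   real (Fdet C S (insert e T)) = real (Fdet C S T) + (if e \<in> CS C S then 1 else 0)"
proof -
  assume a: "finite T" "e \<notin> T"
  show ?thesis
  proof (cases "e \<in> CS C S")
    case True
    then have "CS C S \<inter> insert e T = insert e (CS C S \<inter> T)" by auto
    then show ?thesis unfolding Fdet_def using a True by simp
  next
    case False
    then have "CS C S \<inter> insert e T = CS C S \<inter> T" by auto
    then show ?thesis unfolding Fdet_def using False by simp
  qed
qed





theorem theorem2:
  fixes V :: "'v set" and E :: "'e set" and C :: "'v \<Rightarrow> 'e set"
    and b1 b2 :: nat and \<epsilon> :: real
    and Smin :: "'v set" and Tmax :: "'e set" and xs :: "'v list" and ys :: "'e list"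
  assumes model: "detection_model V E C"
    and b1_pos: "0 < b1" and b2_pos: "0 < b2"
    and b1_lt: "b1 < nstar V E C" and b2_lt: "b2 < mstar V E C"
    and eps_def: "\<epsilon> = real b1 * real b2 *
                    (1 / real (max b1 (mstar V E C)) - 1 / real (nstar V E C))"
    and Smin: "set_cover V E C Smin" "card Smin = nstar V E C"
    and Tmax: "set_packing V E C Tmax" "card Tmax = mstar V E C"
    and xs: "distinct xs" "set xs = Smin"
    and ys: "distinct ys" "set ys = Tmax"
  shows
    "eps_nash V E C b1 b2 \<epsilon> (cyclic_strategy xs b1) (cyclic_strategy ys b2)
     \<and> (\<forall>\<sigma>1s \<sigma>2s. nash V E C b1 b2 \<sigma>1s \<sigma>2s \<longrightarrow>
          \<bar>U1 C (cyclic_strategy xs b1) (cyclic_strategy ys b2) - U1 C \<sigma>1s \<sigma>2s\<bar> \<le> \<epsilon> \<and>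
          \<bar>U2 C (cyclic_strategy xs b1) (cyclic_strategy ys b2) - U2 C \<sigma>1s \<sigma>2s\<bar> \<le> \<epsilon>)
     \<and> (\<forall>\<sigma>2. set_pmf \<sigma>2 \<subseteq> A2 E b2 - {{}} \<longrightarrow>
          real b1 / real (nstar V E C) \<le> detection_rate C (cyclic_strategy xs b1) \<sigma>2)
     \<and> (\<exists>\<sigma>2. set_pmf \<sigma>2 \<subseteq> A2 E b2 - {{}} \<and>
          detection_rate C (cyclic_strategy xs b1) \<sigma>2 = real b1 / real (nstar V E C))
     \<and> (\<forall>\<sigma>1s \<sigma>2s. nash V E C b1 b2 \<sigma>1s \<sigma>2s \<longrightarrow>
          real b1 / real (nstar V E C) \<ge>
          real (max b1 (mstar V E C)) / real (nstar V E C) * detection_rate C \<sigma>1s \<sigma>2s)"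
proof -
  define n where "n = nstar V E C"
  define m where "m = mstar V E C"
  define M where "M = real (max b1 m)"
  let ?P1 = "cyclic_strategy xs b1"
  let ?P2 = "cyclic_strategy ys b2"
  let ?F = "\<lambda>S T. real (Fdet C S T)"
  have finV: "finite V" and finE: "finite E" and subE: "\<forall>i\<in>V. C i \<subseteq> E"
    using model by (auto simp: detection_model_def)
  have SV: "Smin \<subseteq> V" and cov: "CS C Smin = E" using Smin(1) by (auto simp: set_cover_def)
  have TE: "Tmax \<subseteq> E" using Tmax(1) by (auto simp: set_packing_def)
  have lxs: "length xs = n" using xs Smin(2) n_def distinct_card by metis
  have lys: "length ys = m" using ys Tmax(2) m_def distinct_card by metis
  have mn: "m \<le> n" using pack_le_cover[OF model Smin(1) Tmax(1)] Smin(2) Tmax(2) m_def n_def by simp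
  have b1n: "b1 < n" and b2m: "b2 < m" using b1_lt b2_lt n_def m_def by auto
  have npos: "0 < n" using b1n by simp
  have mpos: "0 < m" using b2m by simp
  have xsne: "xs \<noteq> []" using lxs npos by auto
  have ysne: "ys \<noteq> []" using lys mpos by auto
  have Mpos: "M > 0" using M_def mpos by simp
  have eps: "\<epsilon> = b1 * b2 / M - b1 * b2 / n"
    using eps_def M_def n_def m_def by (simp add: right_diff_distrib)
  have finP1: "finite (set_pmf ?P1)" and finP2: "finite (set_pmf ?P2)"
    using cyc_fin xsne ysne by auto
  have fin1: "finite (set_pmf \<sigma>)" if "set_pmf \<sigma> \<subseteq> A1 V b1" for \<sigma> :: "'v set pmf"
    using that finA1[OF finV] finite_subset by blast
  have fin2: "finite (set_pmf \<sigma>)" if "set_pmf \<sigma> \<subseteq> A2 E b2" for \<sigma> :: "'e set pmf"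
    using that finA2[OF finE] finite_subset by blast
  have P1S: "S \<subseteq> Smin \<and> card S \<le> b1" if h: "S \<in> set_pmf ?P1" for S
  proof -
    obtain k where "S = cyc_window xs b1 k" using h cyc_set[OF xsne] by auto
    then show ?thesis using cyc_sub[OF xsne, of b1 k] cyc_card_le[of xs b1 k] xs(2) by simp
  qed
  have P1A: "set_pmf ?P1 \<subseteq> A1 V b1"
    using P1S SV unfolding A1_def by blast
  have P2T: "T \<subseteq> Tmax \<and> card T = b2" if h: "T \<in> set_pmf ?P2" for T
  proof -
    obtain k where "T = cyc_window ys b2 k" using h cyc_set[OF ysne] by auto
    then show ?thesis using cyc_sub[OF ysne, of b2 k] cyc_card[of ys b2 k] ys lys b2m by simp
  qed
  have P2A: "set_pmf ?P2 \<subseteq> A2 E b2"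
    unfolding A2_def using P2T TE by blast
  have Pb1: "PE ?P1 (\<lambda>S. if i \<in> S then 1 else 0) = real b1 / n" if "i \<in> Smin" for i
    using cyc_prob[of xs b1 i] xs lxs b1n that by auto
  have B1: "PE ?P1 (\<lambda>S. ?F S T) \<ge> real (card T) * b1 / n" if "T \<subseteq> E" for T
  proof -
    have fT: "finite T" using that finE finite_subset by auto
    have "PE ?P1 (\<lambda>S. ?F S T) = PE ?P1 (\<lambda>S. \<Sum>e\<in>T. if e \<in> CS C S then 1 else 0)"
      by (intro PE_cong) (simp add: Fdet_def card_as_sum[OF fT, symmetric] Int_commute)
    also have "\<dots> = (\<Sum>e\<in>T. PE ?P1 (\<lambda>S. if e \<in> CS C S then 1 else 0))" by (rule PE_sum)
    also have "\<dots> \<ge> (\<Sum>e\<in>T. real b1 / n)"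
    proof (rule sum_mono)
      fix e assume "e \<in> T"
      then have "e \<in> CS C Smin" using that cov by auto
      then obtain i where i: "i \<in> Smin" "e \<in> C i" by (auto simp: CS_def)
      have "real b1 / n = PE ?P1 (\<lambda>S. if i \<in> S then 1 else 0)" using Pb1[OF i(1)] by simp
      also have "\<dots> \<le> PE ?P1 (\<lambda>S. if e \<in> CS C S then 1 else 0)"
        by (rule PE_mono) (use i in \<open>auto simp: CS_def\<close>)
      finally show "real b1 / n \<le> PE ?P1 (\<lambda>S. if e \<in> CS C S then 1 else 0)" .
    qed
    finally show ?thesis by simp
  qed
  have B2: "PE ?P2 (\<lambda>T. ?F S T) \<le> b1 * b2 / M" if "S \<in> A1 V b1" for S
  proof -
    have S: "S \<subseteq> V" "card S \<le> b1" using that by (auto simp: A1_def)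
    have "PE ?P2 (\<lambda>T. ?F S T) = PE ?P2 (\<lambda>T. real (card (T \<inter> CS C S)))"
      by (intro PE_cong) (simp add: Fdet_def Int_commute)
    also have "\<dots> = real (card (Tmax \<inter> CS C S)) * b2 / m"
      using cyc_mass[of ys b2 "CS C S"] ys lys b2m ysne by simp
    also have "\<dots> \<le> b1 * b2 / M"
    proof -
      have c1: "card (Tmax \<inter> CS C S) \<le> b1"
        using card_CS_pack[OF model S(1) Tmax(1)] S(2) by (simp add: Int_commute)
      have c2: "card (Tmax \<inter> CS C S) \<le> m"
        using card_mono[of Tmax "Tmax \<inter> CS C S"] Tmax(2) m_def TE finE finite_subset by fastforce
      show ?thesis
      proof (cases "b1 \<le> m")
        case True
        then have "M = m" using M_def by simp
        have "real (card (Tmax \<inter> CS C S)) * b2 / m \<le> real b1 * b2 / m"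
          by (intro divide_right_mono mult_right_mono) (use c1 in auto)
        then show ?thesis using \<open>M = m\<close> by simp
      next
        case False
        then have MM: "M = b1" using M_def by simp
        have "real (card (Tmax \<inter> CS C S)) * b2 / m \<le> real m * b2 / m"
          by (intro divide_right_mono mult_right_mono) (use c2 in auto)
        also have "\<dots> = b1 * b2 / M" using MM mpos b1_pos by simp
        finally show ?thesis .
      qed
    qed
    finally show ?thesis .
  qed
  define Ucc where "Ucc = U1 C ?P1 ?P2"
  have Ucc1: "Ucc = PE ?P2 (\<lambda>T. PE ?P1 (\<lambda>S. ?F S T))" unfolding Ucc_def by (rule U1_PE[OF finP1 finP2])
  have Ucc_lo: "Ucc \<ge> b1 * b2 / n"
  proof -
    have "PE ?P2 (\<lambda>T. PE ?P1 (\<lambda>S. ?F S T)) \<ge> PE ?P2 (\<lambda>T. real b2 * b1 / n)"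
    proof (rule PE_mono)
      fix T assume h: "T \<in> set_pmf ?P2"
      then have "T \<subseteq> E" "card T = b2" using P2T[OF h] TE by auto
      then show "real b2 * b1 / n \<le> PE ?P1 (\<lambda>S. ?F S T)" using B1[of T] by simp
    qed
    then show ?thesis using Ucc1 PE_const[OF finP2] by (simp add: mult.commute)
  qed
  have Ucc_hi: "Ucc \<le> b1 * b2 / M"
  proof -
    have "Ucc = PE ?P1 (\<lambda>S. PE ?P2 (\<lambda>T. ?F S T))" unfolding Ucc1 by (rule PE_swap)
    also have "\<dots> \<le> PE ?P1 (\<lambda>S. b1 * b2 / M)"
    proof (rule PE_mono)
      fix S assume h: "S \<in> set_pmf ?P1"
      have "S \<in> A1 V b1" using P1A h by (rule subsetD)
      then show "PE ?P2 (\<lambda>T. ?F S T) \<le> b1 * b2 / M" by (rule B2)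
    qed
    finally show ?thesis using PE_const[OF finP1] by simp
  qed
  have Ucc2: "U2 C ?P1 ?P2 = b2 - Ucc"
  proof -
    have "U2 C ?P1 ?P2 = PE ?P2 (\<lambda>T. real b2 - PE ?P1 (\<lambda>S. ?F S T))"
      unfolding U2_PE[OF finP1 finP2] by (intro PE_cong) (simp add: P2T)
    also have "\<dots> = b2 - Ucc" unfolding Ucc1 PE_diff PE_const[OF finP2] ..
    finally show ?thesis .
  qed
  have att: "U2 C ?P1 \<tau>2 \<le> b2 - b1 * b2 / n" if "set_pmf \<tau>2 \<subseteq> A2 E b2" for \<tau>2
  proof -
    have f: "finite (set_pmf \<tau>2)" using fin2 that by auto
    have "U2 C ?P1 \<tau>2 = PE \<tau>2 (\<lambda>T. real (card T) - PE ?P1 (\<lambda>S. ?F S T))" by (rule U2_PE[OF finP1 f])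
    also have "\<dots> \<le> PE \<tau>2 (\<lambda>T. b2 - b1 * b2 / n)"
    proof (rule PE_mono)
      fix T assume "T \<in> set_pmf \<tau>2"
      then have T: "T \<subseteq> E" "card T \<le> b2" using that by (auto simp: A2_def)
      have "real (card T) - PE ?P1 (\<lambda>S. ?F S T) \<le> real (card T) * (1 - b1 / n)"
        using B1[OF T(1)] by (simp add: right_diff_distrib)
      also have "\<dots> \<le> real b2 * (1 - b1 / n)"
        using T(2) b1n by (intro mult_right_mono) auto
      finally show "real (card T) - PE ?P1 (\<lambda>S. ?F S T) \<le> b2 - b1 * b2 / n"
        by (simp add: right_diff_distrib mult.commute)
    qed
    finally show ?thesis using PE_const[OF f] by simp
  qed
  have def1: "U1 C \<tau>1 ?P2 \<le> b1 * b2 / M" if "set_pmf \<tau>1 \<subseteq> A1 V b1" for \<tau>1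
  proof -
    have f: "finite (set_pmf \<tau>1)" using fin1 that by auto
    have "U1 C \<tau>1 ?P2 = PE \<tau>1 (\<lambda>S. PE ?P2 (\<lambda>T. ?F S T))"
      unfolding U1_PE[OF f finP2] by (rule PE_swap)
    also have "\<dots> \<le> PE \<tau>1 (\<lambda>S. b1 * b2 / M)"
    proof (rule PE_mono)
      fix S assume h: "S \<in> set_pmf \<tau>1"
      have "S \<in> A1 V b1" using that h by (rule subsetD)
      then show "PE ?P2 (\<lambda>T. ?F S T) \<le> b1 * b2 / M" by (rule B2)
    qed
    finally show ?thesis using PE_const[OF f] by simp
  qed
  have partA: "eps_nash V E C b1 b2 \<epsilon> ?P1 ?P2"
    unfolding eps_nash_def
  proof (intro conjI allI impI)
    show "set_pmf ?P1 \<subseteq> A1 V b1" by (rule P1A)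
    show "set_pmf ?P2 \<subseteq> A2 E b2" by (rule P2A)
    fix \<tau>1 assume "set_pmf \<tau>1 \<subseteq> A1 V b1"
    then show "U1 C \<tau>1 ?P2 - \<epsilon> \<le> U1 C ?P1 ?P2" using def1 Ucc_lo eps Ucc_def by fastforce
  next
    fix \<tau>2 assume "set_pmf \<tau>2 \<subseteq> A2 E b2"
    then show "U2 C ?P1 \<tau>2 - \<epsilon> \<le> U2 C ?P1 ?P2" using att Ucc_hi Ucc2 eps by fastforce
  qed
  have NE: "b1 * b2 / n \<le> U1 C \<sigma>1s \<sigma>2s \<and> U1 C \<sigma>1s \<sigma>2s \<le> b1 * b2 / M \<and>
            U2 C \<sigma>1s \<sigma>2s = b2 - U1 C \<sigma>1s \<sigma>2s \<and>
            detection_rate C \<sigma>1s \<sigma>2s = U1 C \<sigma>1s \<sigma>2s / b2"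
    if nash: "nash V E C b1 b2 \<sigma>1s \<sigma>2s" for \<sigma>1s \<sigma>2s
  proof -
    have s1: "set_pmf \<sigma>1s \<subseteq> A1 V b1" and s2: "set_pmf \<sigma>2s \<subseteq> A2 E b2"
      and NE1: "\<And>\<tau>1. set_pmf \<tau>1 \<subseteq> A1 V b1 \<Longrightarrow> U1 C \<tau>1 \<sigma>2s \<le> U1 C \<sigma>1s \<sigma>2s"
      and NE2: "\<And>\<tau>2. set_pmf \<tau>2 \<subseteq> A2 E b2 \<Longrightarrow> U2 C \<sigma>1s \<tau>2 \<le> U2 C \<sigma>1s \<sigma>2s"
      using nash unfolding nash_def eps_nash_def by auto
    have f1: "finite (set_pmf \<sigma>1s)" using fin1[OF s1] .
    have f2: "finite (set_pmf \<sigma>2s)" using fin2[OF s2] .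
    define g where "g T = real (card T) - PE \<sigma>1s (\<lambda>S. ?F S T)" for T
    define Us1 where "Us1 = U1 C \<sigma>1s \<sigma>2s"
    define Us2 where "Us2 = U2 C \<sigma>1s \<sigma>2s"
    have Us1e: "Us1 = PE \<sigma>2s (\<lambda>T. PE \<sigma>1s (\<lambda>S. ?F S T))" unfolding Us1_def by (rule U1_PE[OF f1 f2])
    have Us2e: "Us2 = PE \<sigma>2s g" unfolding Us2_def g_def by (rule U2_PE[OF f1 f2])
    have supT: "T \<subseteq> E \<and> card T \<le> b2" if "T \<in> set_pmf \<sigma>2s" for T
      using s2 that unfolding A2_def by blast
    have gle: "g T \<le> Us2" if "T \<in> A2 E b2" for T
    proof -
      have fr: "finite (set_pmf (return_pmf T))" by simp
      have "set_pmf (return_pmf T) \<subseteq> A2 E b2" using that by simp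
      then have "U2 C \<sigma>1s (return_pmf T) \<le> Us2" unfolding Us2_def by (rule NE2)
      moreover have "U2 C \<sigma>1s (return_pmf T) = g T"
        unfolding U2_PE[OF f1 fr] g_def PE_return ..
      ultimately show ?thesis by simp
    qed
    have low1: "Us1 \<ge> PE \<sigma>2s (\<lambda>T. real (card T) * b1 / n)"
    proof -
      have "U1 C ?P1 \<sigma>2s \<le> Us1" unfolding Us1_def by (rule NE1[OF P1A])
      moreover have "U1 C ?P1 \<sigma>2s \<ge> PE \<sigma>2s (\<lambda>T. real (card T) * b1 / n)"
        unfolding U1_PE[OF finP1 f2]
      proof (rule PE_mono)
        fix T assume "T \<in> set_pmf \<sigma>2s"
        then have "T \<subseteq> E" using supT by blast
        then show "real (card T) * b1 / n \<le> PE ?P1 (\<lambda>S. ?F S T)" by (rule B1)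
      qed
      ultimately show ?thesis by simp
    qed
    have Us2_sum: "Us2 = PE \<sigma>2s (\<lambda>T. real (card T)) - Us1"
      unfolding Us2e g_def PE_diff Us1e ..
    have Us2_hi: "Us2 \<le> b2 - b1 * b2 / n"
    proof -
      have "Us2 \<le> PE \<sigma>2s (\<lambda>T. real (card T)) - PE \<sigma>2s (\<lambda>T. real (card T) * b1 / n)"
        using Us2_sum low1 by simp
      also have "\<dots> = PE \<sigma>2s (\<lambda>T. real (card T) * (1 - b1 / n))"
        unfolding PE_diff[symmetric] by (intro PE_cong) (simp add: right_diff_distrib)
      also have "\<dots> \<le> PE \<sigma>2s (\<lambda>T. b2 - b1 * b2 / n)"
      proof (rule PE_mono)
        fix T assume "T \<in> set_pmf \<sigma>2s"
        then have "card T \<le> b2" using supT by blast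
        then have "real (card T) * (1 - b1 / n) \<le> real b2 * (1 - b1 / n)"
          using b1n by (intro mult_right_mono) auto
        then show "real (card T) * (1 - b1 / n) \<le> b2 - b1 * b2 / n"
          by (simp add: right_diff_distrib mult.commute)
      qed
      finally show ?thesis using PE_const[OF f2] by simp
    qed
    have full: "card T = b2" if T0: "T \<in> set_pmf \<sigma>2s" for T
    proof (rule ccontr)
      assume "card T \<noteq> b2"
      then have lt: "card T < b2" using supT[OF T0] by auto
      have TE0: "T \<subseteq> E" using supT[OF T0] by blast
      have fT: "finite T" using TE0 finE finite_subset by auto
      have gT: "g T = Us2"
      proof (rule PE_avg_eq[OF f2 _ _ T0])
        show "g x \<le> Us2" if "x \<in> set_pmf \<sigma>2s" for x using gle s2 that by blast
        show "Us2 \<le> PE \<sigma>2s g" using Us2e by simp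
      qed
      have covered: "e \<in> CS C S" if e: "e \<in> E - T" and S: "S \<in> set_pmf \<sigma>1s" for e S
      proof -
        have A: "insert e T \<in> A2 E b2" using e TE0 lt fT unfolding A2_def by auto
        have "g (insert e T) = g T + 1 - PE \<sigma>1s (\<lambda>S. if e \<in> CS C S then 1 else 0)"
        proof -
          have "PE \<sigma>1s (\<lambda>S. ?F S (insert e T)) = PE \<sigma>1s (\<lambda>S. ?F S T + (if e \<in> CS C S then 1 else 0))"
            using Fdet_insert[OF fT, of e C] e by (intro PE_cong) simp
          then show ?thesis unfolding g_def PE_add using e fT by simp
        qed
        then have "PE \<sigma>1s (\<lambda>S. if e \<in> CS C S then 1 else 0) \<ge> 1" using gle[OF A] gT by simp
        then have "(if e \<in> CS C S then 1 else 0 :: real) = 1"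
          by (intro PE_avg_eq[OF f1 _ _ S]) auto
        then show ?thesis by (simp split: if_splits)
      qed
      have gbig: "g T \<ge> real n - b1"
      proof -
        have "PE \<sigma>1s (\<lambda>S. ?F S T) \<le> PE \<sigma>1s (\<lambda>S. real (card T) + b1 - n)"
        proof (rule PE_mono)
          fix S assume S: "S \<in> set_pmf \<sigma>1s"
          then have SA: "S \<subseteq> V" "card S \<le> b1" using s1 unfolding A1_def by auto
          have sub: "E - CS C S \<subseteq> T - CS C S" using covered[OF _ S] by blast
          have "n \<le> card S + card (E - CS C S)" using uncovered[OF model SA(1)] n_def by simp
          also have "\<dots> \<le> b1 + card (T - CS C S)"
            using SA(2) card_mono[OF _ sub] fT by simp
          finally have i1: "n \<le> b1 + card (T - CS C S)" .
          have "card (T - CS C S) + card (CS C S \<inter> T) = card T"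
            using card_Int_Diff[OF fT, of "CS C S"] by (simp add: Int_commute)
          then show "?F S T \<le> real (card T) + b1 - n" using i1 unfolding Fdet_def by simp
        qed
        then show ?thesis unfolding g_def using PE_const[OF f1] by simp
      qed
      have "real n - b1 \<le> b2 - b1 * b2 / n" using gbig gT Us2_hi by simp
      then have "(real n - b1) * n \<le> (b2 - b1 * b2 / n) * n" using npos by (intro mult_right_mono) auto
      also have "\<dots> = b2 * (real n - b1)" using npos by (simp add: field_simps)
      finally have "real n * (real n - b1) \<le> b2 * (real n - b1)" by (simp add: mult.commute)
      then have "real n \<le> b2" using b1n by (simp add: mult_le_cancel_right)
      then show False using b2m mn by simp
    qed
    have EcT: "PE \<sigma>2s (\<lambda>T. real (card T)) = b2"
      using full PE_const[OF f2] by (simp add: PE_cong[of \<sigma>2s "\<lambda>T. real (card T)" "\<lambda>_. real b2"])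
    have lo: "Us1 \<ge> b1 * b2 / n"
    proof -
      have "PE \<sigma>2s (\<lambda>T. real (card T) * b1 / n) = PE \<sigma>2s (\<lambda>T. real b2 * b1 / n)"
        using full by (intro PE_cong) simp
      then show ?thesis using low1 PE_const[OF f2] by (simp add: mult.commute)
    qed
    have hi: "Us1 \<le> b1 * b2 / M"
    proof -
      have "U2 C \<sigma>1s ?P2 \<le> Us2" unfolding Us2_def by (rule NE2[OF P2A])
      moreover have "U2 C \<sigma>1s ?P2 = b2 - PE \<sigma>1s (\<lambda>S. PE ?P2 (\<lambda>T. ?F S T))"
      proof -
        have "U2 C \<sigma>1s ?P2 = PE ?P2 (\<lambda>T. real b2 - PE \<sigma>1s (\<lambda>S. ?F S T))"
          unfolding U2_PE[OF f1 finP2] by (intro PE_cong) (simp add: P2T)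
        also have "\<dots> = b2 - PE ?P2 (\<lambda>T. PE \<sigma>1s (\<lambda>S. ?F S T))"
          unfolding PE_diff PE_const[OF finP2] ..
        also have "\<dots> = b2 - PE \<sigma>1s (\<lambda>S. PE ?P2 (\<lambda>T. ?F S T))"
          using PE_swap[of ?P2 "\<sigma>1s" "\<lambda>T S. ?F S T"] by simp
        finally show ?thesis .
      qed
      moreover have "PE \<sigma>1s (\<lambda>S. PE ?P2 (\<lambda>T. ?F S T)) \<le> PE \<sigma>1s (\<lambda>S. b1 * b2 / M)"
      proof (rule PE_mono)
        fix S assume h: "S \<in> set_pmf \<sigma>1s"
        have "S \<in> A1 V b1" using s1 h by (rule subsetD)
        then show "PE ?P2 (\<lambda>T. ?F S T) \<le> b1 * b2 / M" by (rule B2)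
      qed
      ultimately show ?thesis using Us2_sum EcT PE_const[OF f1] by simp
    qed
    have rate: "detection_rate C \<sigma>1s \<sigma>2s = Us1 / b2"
    proof -
      have "detection_rate C \<sigma>1s \<sigma>2s = PE \<sigma>2s (\<lambda>T. PE \<sigma>1s (\<lambda>S. ?F S T) / b2)"
        unfolding rate_PE[OF f1 f2] using full by (intro PE_cong) simp
      then show ?thesis unfolding PE_divide Us1e .
    qed
    show ?thesis using lo hi rate Us2_sum EcT Us1_def Us2_def by simp
  qed
  have rateC: "real b1 / real n \<le> detection_rate C ?P1 \<sigma>2" if h: "set_pmf \<sigma>2 \<subseteq> A2 E b2 - {{}}" for \<sigma>2
  proof -
    have s2: "set_pmf \<sigma>2 \<subseteq> A2 E b2" using h by blast
    have f: "finite (set_pmf \<sigma>2)" using fin2[OF s2] .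
    have "PE \<sigma>2 (\<lambda>_. real b1 / n) \<le> PE \<sigma>2 (\<lambda>T. PE ?P1 (\<lambda>S. ?F S T) / real (card T))"
    proof (rule PE_mono)
      fix T assume T: "T \<in> set_pmf \<sigma>2"
      then have TE': "T \<subseteq> E" and ne: "T \<noteq> {}" using h unfolding A2_def by auto
      have fT: "finite T" using TE' finE finite_subset by auto
      have cp: "0 < real (card T)" using fT ne by (simp add: card_gt_0_iff)
      have "real (card T) * b1 / n \<le> PE ?P1 (\<lambda>S. ?F S T)" by (rule B1[OF TE'])
      then have "real b1 / n \<le> PE ?P1 (\<lambda>S. ?F S T) / real (card T)"
        using cp by (simp add: field_simps)
      then show "real b1 / n \<le> PE ?P1 (\<lambda>S. ?F S T) / real (card T)" .
    qed
    then show ?thesis unfolding rate_PE[OF finP1 f] using PE_const[OF f] by simp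
  qed
  have rateEx: "\<exists>\<sigma>2. set_pmf \<sigma>2 \<subseteq> A2 E b2 - {{}} \<and> detection_rate C ?P1 \<sigma>2 = real b1 / real n"
  proof -
    have x0: "xs ! 0 \<in> Smin" using xsne xs(2) by auto
    obtain e0 where e0: "e0 \<in> C (xs ! 0)" "\<forall>i\<in>Smin. e0 \<in> C i \<longrightarrow> i = xs ! 0"
      using private_elem[OF model Smin x0] by blast
    have e0E: "e0 \<in> E" using e0(1) x0 SV subE by blast
    let ?s = "return_pmf {e0}"
    have sA: "set_pmf ?s \<subseteq> A2 E b2 - {{}}" using e0E b2_pos unfolding A2_def by auto
    have fs: "finite (set_pmf ?s)" by simp
    have "detection_rate C ?P1 ?s = PE ?P1 (\<lambda>S. ?F S {e0})"
      unfolding rate_PE[OF finP1 fs] PE_return by simp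
    also have "\<dots> = PE ?P1 (\<lambda>S. if xs ! 0 \<in> S then 1 else 0)"
    proof (rule PE_cong)
      fix S assume S: "S \<in> set_pmf ?P1"
      then have SS: "S \<subseteq> Smin" using P1S by blast
      have "e0 \<in> CS C S \<longleftrightarrow> xs ! 0 \<in> S"
        using SS e0 unfolding CS_def by blast
      then show "?F S {e0} = (if xs ! 0 \<in> S then 1 else 0)"
        unfolding Fdet_def by (cases "xs ! 0 \<in> S") auto
    qed
    also have "\<dots> = real b1 / n" by (rule Pb1[OF x0])
    finally show ?thesis using sA by blast
  qed
  show ?thesis
  proof (intro conjI allI impI)
    show "eps_nash V E C b1 b2 \<epsilon> ?P1 ?P2" by (rule partA)
  next
    fix \<sigma>1s \<sigma>2s assume h: "nash V E C b1 b2 \<sigma>1s \<sigma>2s"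
    note N = NE[OF h]
    show "\<bar>U1 C ?P1 ?P2 - U1 C \<sigma>1s \<sigma>2s\<bar> \<le> \<epsilon>"
      using N Ucc_lo Ucc_hi eps Ucc_def by (simp add: abs_le_iff)
    show "\<bar>U2 C ?P1 ?P2 - U2 C \<sigma>1s \<sigma>2s\<bar> \<le> \<epsilon>"
      using N Ucc_lo Ucc_hi eps Ucc_def Ucc2 by (simp add: abs_le_iff)
  next
    fix \<sigma>2 assume "set_pmf \<sigma>2 \<subseteq> A2 E b2 - {{}}"
    then show "real b1 / real (nstar V E C) \<le> detection_rate C ?P1 \<sigma>2" using rateC n_def by simp
  next
    show "\<exists>\<sigma>2. set_pmf \<sigma>2 \<subseteq> A2 E b2 - {{}} \<and>
          detection_rate C ?P1 \<sigma>2 = real b1 / real (nstar V E C)" using rateEx n_def by simp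
  next
    fix \<sigma>1s \<sigma>2s assume h: "nash V E C b1 b2 \<sigma>1s \<sigma>2s"
    note N = NE[OF h]
    have r: "detection_rate C \<sigma>1s \<sigma>2s \<le> b1 / M"
    proof -
      have "detection_rate C \<sigma>1s \<sigma>2s = U1 C \<sigma>1s \<sigma>2s / b2" using N by simp
      also have "\<dots> \<le> (b1 * b2 / M) / b2" using N b2_pos by (intro divide_right_mono) auto
      also have "\<dots> = b1 / M" using b2_pos by simp
      finally show ?thesis .
    qed
    have "M / n * detection_rate C \<sigma>1s \<sigma>2s \<le> M / n * (b1 / M)"
      using r Mpos npos by (intro mult_left_mono) auto
    also have "\<dots> = b1 / n" using Mpos by simp
    finally show "real (max b1 (mstar V E C)) / real (nstar V E C) * detection_rate C \<sigma>1s \<sigma>2s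
          \<le> real b1 / real (nstar V E C)" using M_def m_def n_def by simp
  qed
qed


end
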